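(* Let $M$ be a sofic monoid, let $\Sigma=(D_i,\sigma_i)_{i\in I}$ be a sofic approximation of $M$, let $A$ be a finite set, and let $X\subset A^M$ be a subshift. Then $h_\Sigma(X,M,\rho)\le\log|A|$, where $\rho$ is the pseudometric on $X$ given by $\rho(x,y)=0$ if $x(1_M)=y(1_M)$ and $\rho(x,y)=1$ otherwise.
   Context: $A^M$ is the set of maps $M\to A$ with the prodiscrete topology and shift action $(mx)(m')=x(m'm)$; a subshift is a closed $M$-invariant subset. Hamming metric on $\operatorname{Map}(D)$ (maps $D\to D$, $D$ finite non-empty): $d_D^{\mathrm{Ham}}(f,g)=\frac{1}{|D|}|\{v:f(v)\ne g(v)\}|$. A sofic approximation of $M$ is a net $(D_i,\sigma_i)_{i\in I}$ over a directed set, $D_i$ non-empty finite, $\sigma_i\colon M\to\operatorname{Map}(D_i)$, with $\sigma_i(1_M)=\mathrm{Id}_{D_i}$, $\lim_i d^{\mathrm{Ham}}_{D_i}(\sigma_i(m_1m_2),\sigma_i(m_1)\sigma_i(m_2))=0$ for all $m_1,m_2$, and $\lim_i d^{\mathrm{Ham}}_{D_i}(\sigma_i(m_1),\sigma_i(m_2))=1$ for distinct $m_1,m_2$; $M$ is sofic iff it admits one. For a compact space $X$ with continuous $M$-action and continuous pseudometric $\rho$, and non-empty finite $D$: on $X^D$, $\rho_2^D(\varphi,\psi)=(\frac{1}{|D|}\sum_v\rho(\varphi(v),\psi(v))^2)^{1/2}$, $\rho_\infty^D(\varphi,\psi)=\max_v\rho(\varphi(v),\psi(v))$, $(m\varphi)(v)=m\varphi(v)$;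 for finite $F\subset M$, $\delta>0$, $\sigma\colon M\to\operatorname{Map}(D)$: $\operatorname{Map}(X,M,\rho,F,\delta,\sigma)=\{\varphi\in X^D:\rho_2^D(\varphi\circ\sigma(m),m\varphi)\le\delta\ \forall m\in F\}$. $N_\varepsilon(Z,d)$ is the maximal cardinality of a subset of $Z$ with pairwise $d$-distances $\ge\varepsilon$. $h_\Sigma(X,M,\rho)=\sup_{\varepsilon>0}\inf_F\inf_{\delta>0}\limsup_i\frac{1}{|D_i|}\log N_\varepsilon(\operatorname{Map}(X,M,\rho,F,\delta,\sigma_i),\rho_\infty^{D_i})$, infimum over finite $F\subset M$, $\log 0=-\infty$. *)

theory Defs
  imports "HOL-Analysis.Analysis"
begin

definition directed_set :: "'i set \<Rightarrow> ('i \<Rightarrow> 'i \<Rightarrow> bool) \<Rightarrow> bool" where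
  "directed_set I le \<longleftrightarrow> I \<noteq> {} \<and> (\<forall>i\<in>I. le i i)
     \<and> (\<forall>i\<in>I. \<forall>j\<in>I. \<forall>k\<in>I. le i j \<longrightarrow> le j k \<longrightarrow> le i k)
     \<and> (\<forall>i\<in>I. \<forall>j\<in>I. \<exists>k\<in>I. le i k \<and> le j k)"

text \<open>The filter of tails of a directed set; limits of nets are limits along this filter.\<close>
definition net_filter :: "'i set \<Rightarrow> ('i \<Rightarrow> 'i \<Rightarrow> bool) \<Rightarrow> 'i filter" where
  "net_filter I le = (INF i\<in>I. principal {j\<in>I. le i j})"

definition hamming :: "'d set \<Rightarrow> ('d \<Rightarrow> 'd) \<Rightarrow> ('d \<Rightarrow> 'd) \<Rightarrow> real" where
  "hamming D f g = real (card {v\<in>D. f v \<noteq> g v}) / real (card D)"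

definition sofic_approximation ::
  "'i set \<Rightarrow> ('i \<Rightarrow> 'i \<Rightarrow> bool) \<Rightarrow> ('i \<Rightarrow> 'd set) \<Rightarrow> ('i \<Rightarrow> 'm::monoid_mult \<Rightarrow> 'd \<Rightarrow> 'd) \<Rightarrow> bool" where
  "sofic_approximation I le D \<sigma> \<longleftrightarrow> directed_set I le
     \<and> (\<forall>i\<in>I. finite (D i) \<and> D i \<noteq> {})
     \<and> (\<forall>i\<in>I. \<forall>m. \<sigma> i m ` D i \<subseteq> D i)
     \<and> (\<forall>i\<in>I. \<forall>v\<in>D i. \<sigma> i 1 v = v)
     \<and> (\<forall>m1 m2. ((\<lambda>i. hamming (D i) (\<sigma> i (m1 * m2)) (\<sigma> i m1 \<circ> \<sigma> i m2)) \<longlongrightarrow> 0) (net_filter I le))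
     \<and> (\<forall>m1 m2. m1 \<noteq> m2 \<longrightarrow> ((\<lambda>i. hamming (D i) (\<sigma> i m1) (\<sigma> i m2)) \<longlongrightarrow> 1) (net_filter I le))"

definition shift :: "'m::monoid_mult \<Rightarrow> ('m \<Rightarrow> 'a) \<Rightarrow> ('m \<Rightarrow> 'a)" where
  "shift m x = (\<lambda>m'. x (m' * m))"

definition subshift :: "'a set \<Rightarrow> (('m::monoid_mult) \<Rightarrow> 'a) set \<Rightarrow> bool" where
  "subshift A X \<longleftrightarrow> X \<subseteq> (UNIV \<rightarrow>\<^sub>E A)
     \<and> closedin (product_topology (\<lambda>_::'m. discrete_topology A) UNIV) X
     \<and> (\<forall>m. \<forall>x\<in>X. shift m x \<in> X)"

definition elog :: "ereal \<Rightarrow> ereal" where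
  "elog x = (if x \<le> 0 then -\<infinity> else if x = \<infinity> then \<infinity> else ereal (ln (real_of_ereal x)))"

definition rho2 :: "('x \<Rightarrow> 'x \<Rightarrow> real) \<Rightarrow> 'd set \<Rightarrow> ('d \<Rightarrow> 'x) \<Rightarrow> ('d \<Rightarrow> 'x) \<Rightarrow> real" where
  "rho2 \<rho> D \<phi> \<psi> = sqrt ((1 / real (card D)) * (\<Sum>v\<in>D. (\<rho> (\<phi> v) (\<psi> v))\<^sup>2))"

definition rhoinf :: "('x \<Rightarrow> 'x \<Rightarrow> real) \<Rightarrow> 'd set \<Rightarrow> ('d \<Rightarrow> 'x) \<Rightarrow> ('d \<Rightarrow> 'x) \<Rightarrow> real" where
  "rhoinf \<rho> D \<phi> \<psi> = Max ((\<lambda>v. \<rho> (\<phi> v) (\<psi> v)) ` D)"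

definition Map_set ::
  "'x set \<Rightarrow> ('m \<Rightarrow> 'x \<Rightarrow> 'x) \<Rightarrow> ('x \<Rightarrow> 'x \<Rightarrow> real) \<Rightarrow> 'm set \<Rightarrow> real
     \<Rightarrow> 'd set \<Rightarrow> ('m \<Rightarrow> 'd \<Rightarrow> 'd) \<Rightarrow> ('d \<Rightarrow> 'x) set" where
  "Map_set X act \<rho> F \<delta> D \<sigma> =
     {\<phi> \<in> D \<rightarrow>\<^sub>E X. \<forall>m\<in>F. rho2 \<rho> D (\<phi> \<circ> \<sigma> m) (\<lambda>v. act m (\<phi> v)) \<le> \<delta>}"

definition sep_number :: "real \<Rightarrow> 'z set \<Rightarrow> ('z \<Rightarrow> 'z \<Rightarrow> real) \<Rightarrow> ereal" where
  "sep_number \<epsilon> Z d = (SUP S\<in>{S. S \<subseteq> Z \<and> finite S \<and> (\<forall>x\<in>S. \<forall>y\<in>S. x \<noteq> y \<longrightarrow> d x y \<ge> \<epsilon>)}.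
       ereal (real (card S)))"

definition sofic_entropy ::
  "'i set \<Rightarrow> ('i \<Rightarrow> 'i \<Rightarrow> bool) \<Rightarrow> ('i \<Rightarrow> 'd set) \<Rightarrow> ('i \<Rightarrow> 'm \<Rightarrow> 'd \<Rightarrow> 'd)
     \<Rightarrow> 'x set \<Rightarrow> ('m \<Rightarrow> 'x \<Rightarrow> 'x) \<Rightarrow> ('x \<Rightarrow> 'x \<Rightarrow> real) \<Rightarrow> ereal" where
  "sofic_entropy I le D \<sigma> X act \<rho> =
     (SUP \<epsilon>\<in>{0<..}. INF F\<in>{F. finite F}. INF \<delta>\<in>{0<..}.
        Limsup (net_filter I le)
          (\<lambda>i. ereal (1 / real (card (D i))) *
                elog (sep_number \<epsilon> (Map_set X act \<rho> F \<delta> (D i) (\<sigma> i)) (rhoinf \<rho> (D i)))))"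

end

theory Submission
  imports Defs
begin

lemma sep_bound:
  fixes X :: "('m::monoid_mult \<Rightarrow> 'a) set" and D :: "'d set"
  assumes XA: "X \<subseteq> UNIV \<rightarrow>\<^sub>E A" and fA: "finite A" and fD: "finite D" and Dne: "D \<noteq> {}" and e: "\<epsilon> > 0"
  shows "sep_number \<epsilon> (Map_set X act (\<lambda>x y. if x 1 = y 1 then 0 else 1) F \<delta> D \<sigma>)
           (rhoinf (\<lambda>x y. if x 1 = y 1 then 0 else (1::real)) D) \<le> ereal (real (card A ^ card D))"
  unfolding sep_number_def
proof (rule SUP_least)
  fix S assume "S \<in> {S. S \<subseteq> Map_set X act (\<lambda>x y. if x 1 = y 1 then 0 else 1) F \<delta> D \<sigma> \<and> finite S \<and>
      (\<forall>x\<in>S. \<forall>y\<in>S. x \<noteq> y \<longrightarrow> \<epsilon> \<le> rhoinf (\<lambda>x y. if x 1 = y 1 then 0 else (1::real)) D x y)}"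
  hence SM: "S \<subseteq> Map_set X act (\<lambda>x y. if x 1 = y 1 then 0 else 1) F \<delta> D \<sigma>" and fS: "finite S"
    and sep: "\<And>x y. x \<in> S \<Longrightarrow> y \<in> S \<Longrightarrow> x \<noteq> y \<Longrightarrow> \<epsilon> \<le> rhoinf (\<lambda>x y. if x 1 = y 1 then 0 else (1::real)) D x y"
    by auto
  have SD: "S \<subseteq> D \<rightarrow>\<^sub>E X" using SM unfolding Map_set_def by auto
  define g where "g = (\<lambda>\<phi>::'d \<Rightarrow> 'm \<Rightarrow> 'a. restrict (\<lambda>v. \<phi> v 1) D)"
  have inj: "inj_on g S"
  proof (rule inj_onI, rule ccontr)
    fix x y assume xS: "x \<in> S" and yS: "y \<in> S" and gxy: "g x = g y" and ne: "x \<noteq> y"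
    have r: "\<epsilon> \<le> rhoinf (\<lambda>x y. if x 1 = y 1 then 0 else (1::real)) D x y" using sep xS yS ne by blast
    show False
    proof -
      have False: "D \<noteq> {}" by (rule Dne)
      have eq: "\<And>v. v \<in> D \<Longrightarrow> x v 1 = y v 1" using gxy unfolding g_def by (metis restrict_apply')
      have "(\<lambda>v. if x v 1 = y v 1 then 0 else (1::real)) ` D = {0}" using eq False by auto
      then show ?thesis using r e by (simp add: rhoinf_def)
    qed
  qed
  have img: "g ` S \<subseteq> D \<rightarrow>\<^sub>E A"
  proof
    fix z assume "z \<in> g ` S"
    then obtain \<phi> where "\<phi> \<in> S" "z = g \<phi>" by auto
    then have "\<And>v. v \<in> D \<Longrightarrow> \<phi> v \<in> X" using SD by auto
    then have "\<And>v. v \<in> D \<Longrightarrow> \<phi> v 1 \<in> A" using XA by auto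
    then show "z \<in> D \<rightarrow>\<^sub>E A" using \<open>z = g \<phi>\<close> unfolding g_def by auto
  qed
  have "card S = card (g ` S)" using inj by (simp add: card_image)
  also have "\<dots> \<le> card (D \<rightarrow>\<^sub>E A)" using img by (intro card_mono) (auto simp: fD fA finite_PiE)
  also have "\<dots> = card A ^ card D" using fD by (simp add: card_PiE)
  finally show "ereal (real (card S)) \<le> ereal (real (card A ^ card D))" by simp
qed

lemma term_bound:
  fixes s :: ereal and n N :: nat
  assumes n: "n \<ge> 1" and s: "s \<le> ereal (real (N ^ n))"
  shows "ereal (1 / real n) * elog s \<le> elog (ereal (real N))"
proof (cases "s \<le> 0")
  case True
  have "ereal (1 / real n) > 0" using n by simp
  then show ?thesis using True by (simp add: elog_def)
next
  case False
  then have sp: "s > 0" by simp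
  have sf: "s \<noteq> \<infinity>" using s by auto
  obtain r where r: "s = ereal r" using sp sf by (cases s) auto
  have rp: "r > 0" using sp r by simp
  have rN: "r \<le> real N ^ n" using s r by simp
  have Np: "real N > 0"
  proof (rule ccontr)
    assume "\<not> real N > 0" then have "N = 0" by simp
    then show False using rN rp n by (simp add: power_0_left)
  qed
  have "ln r \<le> ln (real N ^ n)" using rN rp by (intro ln_mono) auto
  also have "\<dots> = real n * ln (real N)" using Np by (simp add: ln_realpow)
  finally have "(1 / real n) * ln r \<le> ln (real N)" using n by (simp add: field_simps)
  then show ?thesis using rp r Np by (simp add: elog_def)
qed

theorem lemma5p1:
  fixes I :: "'i set" and le :: "'i \<Rightarrow> 'i \<Rightarrow> bool"
    and D :: "'i \<Rightarrow> 'd set" and \<sigma> :: "'i \<Rightarrow> 'm::monoid_mult \<Rightarrow> 'd \<Rightarrow> 'd"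
    and A :: "'a set" and X :: "('m \<Rightarrow> 'a) set"
  assumes "sofic_approximation I le D \<sigma>"
    and "finite A"
    and "subshift A X"
  shows "sofic_entropy I le D \<sigma> X shift (\<lambda>x y. if x 1 = y 1 then 0 else 1)
           \<le> elog (ereal (real (card A)))"
proof -
  have dir: "directed_set I le" and DI: "\<And>i. i \<in> I \<Longrightarrow> finite (D i) \<and> D i \<noteq> {}"
    using assms(1) unfolding sofic_approximation_def by auto
  have XA: "X \<subseteq> UNIV \<rightarrow>\<^sub>E A" using assms(3) unfolding subshift_def by auto
  obtain i0 where i0: "i0 \<in> I" using dir unfolding directed_set_def by auto
  have ev: "eventually (\<lambda>i. i \<in> I) (net_filter I le)"
  proof -
    have "net_filter I le \<le> principal {j\<in>I. le i0 j}" unfolding net_filter_def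
      using i0 by (rule INF_lower)
    moreover have "eventually (\<lambda>i. i \<in> I) (principal {j\<in>I. le i0 j})"
      by (simp add: eventually_principal)
    ultimately show ?thesis using filter_leD by blast
  qed
  show ?thesis unfolding sofic_entropy_def
  proof (rule SUP_least)
    fix \<epsilon> :: real assume "\<epsilon> \<in> {0<..}"
    hence e: "\<epsilon> > 0" by simp
    let ?f = "\<lambda>F \<delta> i. ereal (1 / real (card (D i))) *
                elog (sep_number \<epsilon> (Map_set X shift (\<lambda>x y. if x 1 = y 1 then 0 else 1) F \<delta> (D i) (\<sigma> i))
                  (rhoinf (\<lambda>x y. if x 1 = y 1 then 0 else 1) (D i)))"
    have L: "Limsup (net_filter I le) (?f {} 1) \<le> elog (ereal (real (card A)))"
    proof (rule Limsup_bounded)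
      show "eventually (\<lambda>i. ?f {} 1 i \<le> elog (ereal (real (card A)))) (net_filter I le)"
        using ev
      proof (rule eventually_mono)
        fix i assume "i \<in> I"
        then have fD: "finite (D i)" and ne: "D i \<noteq> {}" using DI by auto
        have "card (D i) \<ge> 1" using fD ne by (simp add: Suc_le_eq card_gt_0_iff)
        moreover have "sep_number \<epsilon> (Map_set X shift (\<lambda>x y. if x 1 = y 1 then 0 else 1) {} 1 (D i) (\<sigma> i))
                  (rhoinf (\<lambda>x y. if x 1 = y 1 then 0 else 1) (D i)) \<le> ereal (real (card A ^ card (D i)))"
          by (rule sep_bound[OF XA assms(2) fD ne e])
        ultimately show "?f {} 1 i \<le> elog (ereal (real (card A)))" by (rule term_bound)
      qed
    qed
    have "(INF \<delta>\<in>{0<..}. Limsup (net_filter I le) (?f {} \<delta>)) \<le> Limsup (net_filter I le) (?f {} 1)"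
      by (rule INF_lower) simp
    then have "(INF \<delta>\<in>{0<..}. Limsup (net_filter I le) (?f {} \<delta>)) \<le> elog (ereal (real (card A)))"
      using L by (rule order_trans)
    then show "(INF F\<in>{F. finite F}. INF \<delta>\<in>{0<..}. Limsup (net_filter I le) (?f F \<delta>)) \<le> elog (ereal (real (card A)))"
      by (rule INF_lower2[rotated]) simp
  qed
qed

end
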